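(* $\mathrm{cov}(\mathcal M)\leq\mathfrak{ss}_c$ and dually $\mathfrak{ss}_c^\perp\leq\mathrm{non}(\mathcal M)$.
   Context: Let $\mathfrak S$ be the set of all sequences $\mathbf a=\langle a_i:i\in\omega\rangle$ of rational numbers with $a_i\to 0$. Let $[\omega]^\omega_\omega$ denote the set of infinite coinfinite subsets of $\omega$. For infinite $X\subseteq\omega$ with increasing enumeration $\langle i_n\rangle$ put $\mathbf a\restriction X=\langle a_{i_n}:n\in\omega\rangle$ and write $\sum_X\mathbf a$ for $\sum_n a_{i_n}$. A series is convergent if its partial sums converge to a real number; it is conditional if $\sum_{\{i:a_i>0\}}\mathbf a=\infty$ and $\sum_{\{i:a_i<0\}}\mathbf a=-\infty$; conditionally convergent if both. Let $\mathfrak S_c$, $\mathfrak S_{cc}$ be the sets of $\mathbf a\in\mathfrak S$ whose series is convergent, resp. conditionally convergent. $\mathfrak{ss}_c$ is the least cardinality of a family $\mathcal X\subseteq[\omega]^\omega_\omega$ such that for every $\mathbf a\in\mathfrak S_{cc}$ there is $X\in\mathcal X$ with $\sum_X\mathbf a$ convergent; $\mathfrak{ss}_c^\perp$ is the least cardinality of a family $\mathcal A\subseteq\mathfrak S_{cc}$ such that no $X\in[\omega]^\omega_\omega$ makes $\sum_X\mathbf a$ convergent for all $\mathbf a\in\mathcal A$. $\mathrm{cov}(\mathcal M)$ and $\mathrm{non}(\mathcal M)$ are the covering and uniformity numbers of the meagre ideal. *)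

theory Defs
  imports "HOL-Analysis.Analysis" "HOL-Library.Equipollence"
begin

definition nowhere_dense :: "real set \<Rightarrow> bool" where
  "nowhere_dense S \<longleftrightarrow> interior (closure S) = {}"

definition meagre :: "real set \<Rightarrow> bool" where
  "meagre S \<longleftrightarrow> (\<exists>F. countable F \<and> (\<forall>T\<in>F. nowhere_dense T) \<and> S \<subseteq> \<Union>F)"

definition infcoinf :: "nat set set" where
  "infcoinf = {X. infinite X \<and> infinite (UNIV - X)}"

definition sub_seq :: "(nat \<Rightarrow> rat) \<Rightarrow> nat set \<Rightarrow> nat \<Rightarrow> real" where
  "sub_seq a X = (\<lambda>n. real_of_rat (a (enumerate X n)))"

definition subseries_convergent :: "(nat \<Rightarrow> rat) \<Rightarrow> nat set \<Rightarrow> bool" where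
  "subseries_convergent a X \<longleftrightarrow> summable (sub_seq a X)"

definition seqs0 :: "(nat \<Rightarrow> rat) set" where
  "seqs0 = {a. (\<lambda>i. real_of_rat (a i)) \<longlonglongrightarrow> 0}"

definition conditional :: "(nat \<Rightarrow> rat) \<Rightarrow> bool" where
  "conditional a \<longleftrightarrow>
     infinite {i. a i > 0} \<and>
     filterlim (\<lambda>n. \<Sum>k<n. sub_seq a {i. a i > 0} k) at_top sequentially \<and>
     infinite {i. a i < 0} \<and>
     filterlim (\<lambda>n. \<Sum>k<n. sub_seq a {i. a i < 0} k) at_bot sequentially"

definition S_cc :: "(nat \<Rightarrow> rat) set" where
  "S_cc = {a \<in> seqs0. summable (\<lambda>i. real_of_rat (a i)) \<and> conditional a}"

end

theory Submission
  imports Defs "HOL-Analysis.Harmonic_Numbers"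
begin


definition rbit :: "nat \<Rightarrow> real \<Rightarrow> bool" where
  "rbit j r = odd \<lfloor>2^j * r\<rfloor>"

definition cyl :: "nat \<Rightarrow> int \<Rightarrow> real set" where
  "cyl m k = {real_of_int k / 2^m <..< (real_of_int k + 1) / 2^m}"

lemma floor_cyl:
  assumes r: "r \<in> cyl m k" and j: "j \<le> m"
  shows "\<lfloor>2^j * r\<rfloor> = k div 2^(m-j)"
proof -
  define d :: int where "d = 2^(m-j)"
  have dpos: "d > 0" unfolding d_def by simp
  have m: "(2::real)^m = 2^j * real_of_int d" unfolding d_def using j
    by (simp add: power_add[symmetric])
  define y where "y = 2^j * r"
  have lo: "real_of_int k < real_of_int d * y" and hi: "real_of_int d * y < real_of_int k + 1"
  proof -
    have pos: "real_of_int d * 2^j > 0" using dpos by simp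
    have "real_of_int k / (real_of_int d * 2^j) < r" "r < (real_of_int k + 1) / (real_of_int d * 2^j)"
      using r unfolding cyl_def m by (auto simp: mult.commute)
    thus "real_of_int k < real_of_int d * y" "real_of_int d * y < real_of_int k + 1"
      using pos unfolding y_def by (auto simp: divide_less_eq less_divide_eq mult.commute mult.left_commute)
  qed
  have i1: "(k div d) * d \<le> k"
  proof -
    have "k = (k div d) * d + k mod d" by simp
    moreover have "k mod d \<ge> 0" using dpos by simp
    ultimately show ?thesis by linarith
  qed
  have i2: "k + 1 \<le> (k div d + 1) * d"
  proof -
    have "k = (k div d) * d + k mod d" by simp
    moreover have "k mod d < d" using dpos by simp
    moreover have "(k div d + 1)*d = k div d * d + d" by (simp add: algebra_simps)
    ultimately show ?thesis by linarith
  qed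
  have "real_of_int (k div d) * real_of_int d \<le> real_of_int k" using i1
    by (metis of_int_le_iff of_int_mult)
  hence a: "real_of_int (k div d) \<le> y" using lo dpos
    by (smt (verit, ccfv_SIG) mult.commute mult_le_cancel_left_pos of_int_0_less_iff)
  have "real_of_int k + 1 \<le> (real_of_int (k div d) + 1) * real_of_int d" using i2
    by (metis of_int_add of_int_le_iff of_int_mult of_int_1)
  hence b: "y < real_of_int (k div d) + 1" using hi dpos
    by (smt (verit, ccfv_SIG) mult.commute mult_less_cancel_left_pos of_int_0_less_iff)
  show ?thesis unfolding y_def[symmetric] d_def[symmetric] using a b
    by (simp add: floor_eq_iff)
qed

lemma cyl_same:
  assumes "r \<in> cyl m k" "s \<in> cyl m k" "j \<le> m"
  shows "rbit j r = rbit j s"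
  using floor_cyl[OF assms(1,3)] floor_cyl[OF assms(2,3)] unfolding rbit_def by simp

lemma cyl_child_sub:
  assumes "c \<in> {0,1}"
  shows "cyl (Suc m) (2*k + c) \<subseteq> cyl m k"
  using assms unfolding cyl_def by (auto simp: field_simps)

lemma cyl_child_bit:
  assumes "c \<in> {0,1}" "r \<in> cyl (Suc m) (2*k + c)"
  shows "rbit (Suc m) r \<longleftrightarrow> c = 1"
  using floor_cyl[OF assms(2), of "Suc m"] assms(1) unfolding rbit_def by auto

lemma cyl_ext:
  assumes "m \<le> M"
  shows "\<exists>k'. cyl M k' \<subseteq> cyl m k \<and> (\<forall>r\<in>cyl M k'. \<forall>j. m < j \<and> j \<le> M \<longrightarrow> rbit j r = w j)"
  using assms
proof (induction M rule: dec_induct)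
  case base
  then show ?case by auto
next
  case (step M)
  then obtain k' where k': "cyl M k' \<subseteq> cyl m k"
    "\<forall>r\<in>cyl M k'. \<forall>j. m < j \<and> j \<le> M \<longrightarrow> rbit j r = w j" by blast
  define c :: int where "c = (if w (Suc M) then 1 else 0)"
  have c: "c \<in> {0,1}" unfolding c_def by auto
  have sub: "cyl (Suc M) (2*k'+c) \<subseteq> cyl M k'" by (rule cyl_child_sub[OF c])
  show ?case
  proof (intro exI conjI ballI allI impI)
    show "cyl (Suc M) (2*k'+c) \<subseteq> cyl m k" using sub k'(1) by blast
  next
    fix r j assume r: "r \<in> cyl (Suc M) (2*k'+c)" and j: "m < j \<and> j \<le> Suc M"
    show "rbit j r = w j"
    proof (cases "j = Suc M")
      case True
      then show ?thesis using cyl_child_bit[OF c r] unfolding c_def by auto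
    next
      case False
      then show ?thesis using k'(2) sub r j by auto
    qed
  qed
qed

lemma cyl_mid: "(2 * real_of_int k + 1) / 2^(Suc m) \<in> cyl m k"
  unfolding cyl_def by (auto simp: field_simps)

lemma open_cyl: "open (cyl m k)"
  unfolding cyl_def by simp

lemma open_cyl_sub:
  assumes "open U" "x \<in> U"
  shows "\<exists>m k. cyl m k \<subseteq> U"
proof -
  obtain e where e: "e > 0" "ball x e \<subseteq> U" using assms open_contains_ball by blast
  obtain m where m: "(1/2::real)^m < e" using real_arch_pow_inv[OF e(1), of "1/2"] by auto
  define k where "k = \<lfloor>2^m * x\<rfloor>"
  have "cyl m k \<subseteq> ball x e"
  proof
    fix r assume r: "r \<in> cyl m k"
    have "real_of_int k \<le> 2^m * x" "2^m * x < real_of_int k + 1" unfolding k_def by linarith+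
    moreover have "real_of_int k < 2^m * r" "2^m * r < real_of_int k + 1"
      using r unfolding cyl_def by (auto simp: field_simps)
    ultimately have "\<bar>2^m * r - 2^m * x\<bar> < 1" by linarith
    moreover have "2^m * r - 2^m * x = (r - x) * 2^m" by (simp add: algebra_simps)
    ultimately have "\<bar>r - x\<bar> * 2^m < 1" by (simp add: abs_mult)
    hence "\<bar>r - x\<bar> < (1/2)^m" by (simp add: field_simps power_divide)
    thus "r \<in> ball x e" using m by (simp add: dist_real_def abs_minus_commute)
  qed
  thus ?thesis using e by blast
qed

lemma nd_crit:
  assumes "\<And>m k. \<exists>m' k'. cyl m' k' \<subseteq> cyl m k \<and> cyl m' k' \<inter> C = {}"
  shows "nowhere_dense C"
  unfolding nowhere_dense_def
proof (rule ccontr)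
  assume "interior (closure C) \<noteq> {}"
  then obtain x where "x \<in> interior (closure C)" by blast
  then obtain m k where mk: "cyl m k \<subseteq> interior (closure C)"
    using open_cyl_sub[of "interior (closure C)"] by blast
  obtain m' k' where m'k': "cyl m' k' \<subseteq> cyl m k" "cyl m' k' \<inter> C = {}" using assms by blast
  have "cyl m' k' \<inter> closure C = {}" using open_Int_closure_eq_empty[OF open_cyl] m'k'(2) by blast
  moreover have "cyl m' k' \<subseteq> closure C" using mk m'k'(1) interior_subset by blast
  ultimately show False using cyl_mid[of k' m'] by blast
qed



definition cnt :: "(nat \<Rightarrow> bool) \<Rightarrow> nat \<Rightarrow> nat" where
  "cnt b n = card {j. j < n \<and> b j}"

definition dec :: "(nat \<Rightarrow> bool) \<Rightarrow> nat \<Rightarrow> rat" where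
  "dec b i = (if b i then (if even (cnt b i) then 1 else -1) / of_nat (cnt b i div 2 + 1) else 0)"

lemma card_lt_Suc: fixes p :: "nat \<Rightarrow> bool" shows "card {j. j < Suc n \<and> p j} = card {j. j < n \<and> p j} + (if p n then 1 else 0)"
proof -
  have "{j. j < Suc n \<and> p j} = {j. j < n \<and> p j} \<union> (if p n then {n} else {})" by (auto simp: less_Suc_eq)
  moreover have "finite {j. j < n \<and> p j}" by simp
  ultimately show ?thesis by auto
qed

lemma cnt_Suc: "cnt b (Suc n) = cnt b n + (if b n then 1 else 0)"
  unfolding cnt_def by (rule card_lt_Suc)

lemma card_lt_mono: fixes p :: "nat \<Rightarrow> bool" shows "n \<le> n' \<Longrightarrow> card {j. j < n \<and> p j} \<le> card {j. j < n' \<and> p j}"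
  by (intro card_mono) auto

lemma card_lt_unbounded:
  fixes p :: "nat \<Rightarrow> bool"
  assumes "infinite {j. p j}"
  shows "\<exists>n. K \<le> card {j. j < n \<and> p j}"
proof -
  obtain B where B: "B \<subseteq> {j. p j}" "finite B" "card B = K"
    using infinite_arbitrarily_large[OF assms] by blast
  have "B \<subseteq> {j. j < Suc (Max B) \<and> p j}" using B by (auto simp: le_imp_less_Suc)
  hence "card B \<le> card {j. j < Suc (Max B) \<and> p j}" by (intro card_mono) auto
  thus ?thesis using B by auto
qed

lemma card_lt_eventually:
  fixes p :: "nat \<Rightarrow> bool"
  assumes "infinite {j. p j}"
  shows "\<exists>n0. \<forall>n\<ge>n0. K \<le> card {j. j < n \<and> p j}"
  using card_lt_unbounded[OF assms, of K] card_lt_mono[of _ _ p] by (meson le_trans)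

lemma small_eventually:
  assumes "infinite {j. b j}" "(e::real) > 0"
  shows "\<exists>n0. \<forall>i\<ge>n0. 1 / (real (cnt b i div 2) + 1) < e"
proof -
  obtain K :: nat where K: "inverse (real (Suc K)) < e" using reals_Archimedean[OF assms(2)] by auto
  obtain n0 where n0: "\<forall>n\<ge>n0. 2*K \<le> cnt b n"
    using card_lt_eventually[OF assms(1), of "2*K"] unfolding cnt_def by auto
  have "1 / (real (cnt b i div 2) + 1) < e" if "i \<ge> n0" for i
  proof -
    have "K \<le> cnt b i div 2" using n0 that by auto
    hence "1 / (real (cnt b i div 2) + 1) \<le> 1 / (real K + 1)"
      by (intro divide_left_mono) auto
    also have "\<dots> < e" using K by (simp add: inverse_eq_divide add.commute)
    finally show ?thesis .
  qed
  thus ?thesis by blast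
qed

lemma abs_dec: "\<bar>real_of_rat (dec b i)\<bar> \<le> 1 / (real (cnt b i div 2) + 1)"
  unfolding dec_def by (auto simp: of_rat_divide of_rat_minus of_rat_add of_rat_of_nat_eq add.commute)

lemma psum_dec:
  "(\<Sum>i<n. real_of_rat (dec b i)) = (if even (cnt b n) then 0 else 1 / (real (cnt b n div 2) + 1))"
proof (induction n)
  case 0
  then show ?case by (simp add: cnt_def)
next
  case (Suc n)
  show ?case
  proof (cases "b n")
    case False
    then show ?thesis using Suc by (simp add: cnt_Suc dec_def)
  next
    case True
    then show ?thesis using Suc
      by (auto simp: cnt_Suc dec_def of_rat_divide of_rat_minus of_rat_add of_rat_of_nat_eq)
  qed
qed



lemma enum_card:
  fixes S :: "nat set"
  assumes S: "infinite S"
  shows "card {i. i < enumerate S k \<and> i \<in> S} = k"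
proof -
  have "{i. i < enumerate S k \<and> i \<in> S} = enumerate S ` {..<k}"
  proof
    show "{i. i < enumerate S k \<and> i \<in> S} \<subseteq> enumerate S ` {..<k}"
    proof
      fix i assume i: "i \<in> {i. i < enumerate S k \<and> i \<in> S}"
      then obtain j where j: "enumerate S j = i" using enumerate_Ex[OF S] by blast
      hence "j < k" using i S by auto
      thus "i \<in> enumerate S ` {..<k}" using j by auto
    qed
  next
    show "enumerate S ` {..<k} \<subseteq> {i. i < enumerate S k \<and> i \<in> S}"
      using S enumerate_in_set[OF S] by auto
  qed
  moreover have "inj_on (enumerate S) {..<k}" using inj_enumerate[OF S] by (rule inj_on_subset) auto
  ultimately show ?thesis by (simp add: card_image)
qed

lemma cnt_even_count:
  "card {j. j < n \<and> j \<in> {i. b i \<and> even (cnt b i)}} = (cnt b n + 1) div 2"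
proof (induction n)
  case 0 thus ?case by (simp add: cnt_def)
next
  case (Suc n) thus ?case
    by (subst card_lt_Suc) (auto simp: cnt_Suc)
qed

lemma cnt_odd_count:
  "card {j. j < n \<and> j \<in> {i. b i \<and> odd (cnt b i)}} = cnt b n div 2"
proof (induction n)
  case 0 thus ?case by (simp add: cnt_def)
next
  case (Suc n) thus ?case
    by (subst card_lt_Suc) (auto simp: cnt_Suc)
qed

lemma infinite_from_count:
  fixes P :: "nat set"
  assumes "\<And>K. \<exists>n. K \<le> card {j. j < n \<and> j \<in> P}"
  shows "infinite P"
proof
  assume f: "finite P"
  obtain n where "Suc (card P) \<le> card {j. j < n \<and> j \<in> P}" using assms by blast
  moreover have "card {j. j < n \<and> j \<in> P} \<le> card P" using f by (intro card_mono) auto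
  ultimately show False by simp
qed

lemma dec_S_cc:
  assumes inf: "infinite {j. b j}"
  shows "dec b \<in> S_cc"
proof -
  have lim: "(\<lambda>i. real_of_rat (dec b i)) \<longlonglongrightarrow> 0"
  proof (rule LIMSEQ_I)
    fix e :: real assume "0 < e"
    then obtain n0 where "\<forall>i\<ge>n0. 1 / (real (cnt b i div 2) + 1) < e"
      using small_eventually[OF inf] by blast
    thus "\<exists>no. \<forall>n\<ge>no. norm (real_of_rat (dec b n) - 0) < e"
      using abs_dec[of b] by (metis order.strict_trans1 real_norm_def diff_zero)
  qed
  have sums: "(\<lambda>i. real_of_rat (dec b i)) sums 0"
    unfolding sums_def
  proof (rule LIMSEQ_I)
    fix e :: real assume "0 < e"
    then obtain n0 where n0: "\<forall>i\<ge>n0. 1 / (real (cnt b i div 2) + 1) < e"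
      using small_eventually[OF inf] by blast
    show "\<exists>no. \<forall>n\<ge>no. norm ((\<Sum>i<n. real_of_rat (dec b i)) - 0) < e"
      using n0 \<open>0 < e\<close> by (auto simp: psum_dec)
  qed
  define P where "P = {i. b i \<and> even (cnt b i)}"
  define Q where "Q = {i. b i \<and> odd (cnt b i)}"
  have Peq: "{i. dec b i > 0} = P" unfolding P_def dec_def by (auto simp: zero_less_divide_iff)
  have Qeq: "{i. dec b i < 0} = Q" unfolding Q_def dec_def by (auto simp: divide_less_0_iff)
  have cntun: "\<exists>n. K \<le> cnt b n" for K using card_lt_unbounded[OF inf] unfolding cnt_def by blast
  have infP: "infinite P"
  proof (rule infinite_from_count)
    fix K obtain n where "2*K \<le> cnt b n" using cntun by blast
    thus "\<exists>n. K \<le> card {j. j < n \<and> j \<in> P}" unfolding P_def cnt_even_count by (intro exI[of _ n]) auto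
  qed
  have infQ: "infinite Q"
  proof (rule infinite_from_count)
    fix K obtain n where "2*K \<le> cnt b n" using cntun by blast
    thus "\<exists>n. K \<le> card {j. j < n \<and> j \<in> Q}" unfolding Q_def cnt_odd_count by (intro exI[of _ n]) auto
  qed
  have subP: "sub_seq (dec b) P k = inverse (of_nat (Suc k))" for k
  proof -
    define p where "p = enumerate P k"
    have pP: "p \<in> P" unfolding p_def using enumerate_in_set[OF infP] .
    have "card {i. i < p \<and> i \<in> P} = k" unfolding p_def by (rule enum_card[OF infP])
    hence "(cnt b p + 1) div 2 = k" unfolding P_def cnt_even_count .
    hence "cnt b p div 2 = k" using pP unfolding P_def by auto
    moreover have "sub_seq (dec b) P k = real_of_rat (dec b p)" by (simp add: sub_seq_def p_def)
    ultimately show ?thesis using pP unfolding P_def dec_def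
      by (simp add: of_rat_divide of_rat_add of_rat_of_nat_eq of_rat_minus inverse_eq_divide add.commute)
  qed
  have subQ: "sub_seq (dec b) Q k = - inverse (of_nat (Suc k))" for k
  proof -
    define p where "p = enumerate Q k"
    have pQ: "p \<in> Q" unfolding p_def using enumerate_in_set[OF infQ] .
    have "card {i. i < p \<and> i \<in> Q} = k" unfolding p_def by (rule enum_card[OF infQ])
    hence "cnt b p div 2 = k" unfolding Q_def cnt_odd_count .
    moreover have "sub_seq (dec b) Q k = real_of_rat (dec b p)" by (simp add: sub_seq_def p_def)
    ultimately show ?thesis using pQ unfolding Q_def dec_def
      by (simp add: of_rat_divide of_rat_add of_rat_of_nat_eq of_rat_minus inverse_eq_divide add.commute)
  qed
  have condP: "filterlim (\<lambda>n. \<Sum>k<n. sub_seq (dec b) P k) at_top sequentially"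
  proof -
    have "(\<lambda>n. \<Sum>k<n. sub_seq (dec b) P k) = harm"
      by (rule ext) (simp add: subP harm_altdef)
    thus ?thesis using harm_at_top by simp
  qed
  have condQ: "filterlim (\<lambda>n. \<Sum>k<n. sub_seq (dec b) Q k) at_bot sequentially"
  proof -
    have "(\<lambda>n. \<Sum>k<n. sub_seq (dec b) Q k) = (\<lambda>n. - harm n)"
      by (rule ext) (simp add: subQ harm_altdef sum_negf)
    moreover have "filterlim (\<lambda>n. - harm n :: real) at_bot sequentially"
      using harm_at_top filterlim_uminus_at_top[of "harm :: nat \<Rightarrow> real" sequentially] by simp
    ultimately show ?thesis by simp
  qed
  show ?thesis
    unfolding S_cc_def seqs0_def conditional_def Peq Qeq
    using lim sums_summable[OF sums] infP infQ condP condQ by (simp add: Peq Qeq)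
qed



definition T :: "(nat \<Rightarrow> bool) \<Rightarrow> nat set \<Rightarrow> nat \<Rightarrow> real" where
  "T b X n = (\<Sum>i<n. (if i \<in> X then real_of_rat (dec b i) else 0))"

lemma T_Suc: "T b X (Suc n) = T b X n + (if n \<in> X then real_of_rat (dec b n) else 0)"
  unfolding T_def by simp

lemma enum_of_card:
  fixes X :: "nat set"
  assumes X: "infinite X" and n: "n \<in> X"
  shows "enumerate X (card {i. i < n \<and> i \<in> X}) = n"
proof -
  obtain j where j: "enumerate X j = n" using enumerate_Ex[OF X n] by blast
  have "card {i. i < n \<and> i \<in> X} = j" using enum_card[OF X, of j] j by simp
  thus ?thesis using j by simp
qed

lemma T_sub:
  assumes X: "infinite X"
  shows "T b X n = (\<Sum>k < card {i. i < n \<and> i \<in> X}. sub_seq (dec b) X k)"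
proof (induction n)
  case 0 thus ?case by (simp add: T_def)
next
  case (Suc n)
  show ?case
  proof (cases "n \<in> X")
    case True
    have "sub_seq (dec b) X (card {i. i < n \<and> i \<in> X}) = real_of_rat (dec b n)"
      unfolding sub_seq_def using enum_of_card[OF X True] by simp
    thus ?thesis using Suc True by (simp add: T_Suc card_lt_Suc[of n "\<lambda>i. i \<in> X"])
  next
    case False
    thus ?thesis using Suc by (simp add: T_Suc card_lt_Suc[of n "\<lambda>i. i \<in> X"])
  qed
qed

lemma cauchy_T:
  assumes X: "infinite X" and s: "summable (sub_seq (dec b) X)"
  shows "\<exists>N. \<forall>n\<ge>N. \<forall>n'\<ge>N. \<bar>T b X n - T b X n'\<bar> < 1/2"
proof -
  have "Cauchy (\<lambda>n. \<Sum>k<n. sub_seq (dec b) X k)"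
    using s by (simp add: summable_iff_convergent convergent_Cauchy)
  then obtain M where M: "\<forall>m\<ge>M. \<forall>n\<ge>M. norm ((\<Sum>k<m. sub_seq (dec b) X k) - (\<Sum>k<n. sub_seq (dec b) X k)) < 1/2"
    using CauchyD[of _ "1/2"] by fastforce
  obtain n0 where n0: "\<forall>n\<ge>n0. M \<le> card {j. j < n \<and> j \<in> X}"
    using card_lt_eventually[of "\<lambda>j. j \<in> X" M] X by auto
  show ?thesis
    by (rule exI[of _ n0]) (use M n0 in \<open>auto simp: T_sub[OF X]\<close>)
qed

lemma cnt_cong: "(\<And>j. j < n \<Longrightarrow> b j = b' j) \<Longrightarrow> cnt b n = cnt b' n"
  unfolding cnt_def by (metis (mono_tags, lifting) Collect_cong)

lemma seg:
  assumes "p \<le> q" "\<And>j. p \<le> j \<Longrightarrow> j < q \<Longrightarrow> \<not> b j"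
  shows "cnt b q = cnt b p \<and> T b X q = T b X p"
  using assms
proof (induction q rule: dec_induct)
  case base thus ?case by simp
next
  case (step q) thus ?case by (simp add: cnt_Suc T_Suc dec_def)
qed

definition bits :: "real \<Rightarrow> nat \<Rightarrow> bool" where
  "bits r = (\<lambda>j. rbit j r)"

lemma pair_step:
  assumes X: "X \<in> infcoinf" and L: "\<forall>r\<in>cyl M k. cnt (bits r) (Suc M) = 2*L"
  shows "\<exists>M' k'. M \<le> M' \<and> cyl M' k' \<subseteq> cyl M k \<and>
     (\<forall>r\<in>cyl M' k'. cnt (bits r) (Suc M') = 2*L+2 \<and>
        T (bits r) X (Suc M') = T (bits r) X (Suc M) + 1/(real L + 1))"
proof -
  have iX: "infinite X" and iXc: "infinite (UNIV - X)" using X unfolding infcoinf_def by auto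
  obtain x where x: "x > M" "x \<in> X" using iX unfolding infinite_nat_iff_unbounded by blast
  obtain y where y: "y > x" "y \<in> UNIV - X" using iXc unfolding infinite_nat_iff_unbounded by blast
  obtain k' where k': "cyl y k' \<subseteq> cyl M k"
    "\<forall>r\<in>cyl y k'. \<forall>j. M < j \<and> j \<le> y \<longrightarrow> rbit j r = (j = x \<or> j = y)"
    using cyl_ext[of M y k "\<lambda>j. j = x \<or> j = y"] x y by auto
  show ?thesis
  proof (intro exI conjI ballI)
    show "M \<le> y" using x y by simp
    show "cyl y k' \<subseteq> cyl M k" by (rule k'(1))
  next
    fix r assume r: "r \<in> cyl y k'"
    define b where "b = bits r"
    have bj: "M < j \<Longrightarrow> j \<le> y \<Longrightarrow> b j = (j = x \<or> j = y)" for j using k'(2) r unfolding b_def bits_def by auto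
    have c0: "cnt b (Suc M) = 2*L" using L k'(1) r unfolding b_def by auto
    have s1: "cnt b x = cnt b (Suc M) \<and> T b X x = T b X (Suc M)"
      by (rule seg) (use x y bj in auto)
    have s2: "cnt b y = cnt b (Suc x) \<and> T b X y = T b X (Suc x)"
      by (rule seg) (use x y bj in auto)
    have bx: "b x" and by': "b y" using bj x y by auto
    have dx: "real_of_rat (dec b x) = 1/(real L + 1)"
      using bx s1 c0 unfolding dec_def by (simp add: of_rat_divide of_rat_add of_rat_of_nat_eq add.commute)
    show "cnt (bits r) (Suc y) = 2*L+2"
      using s1 s2 c0 bx by' unfolding b_def[symmetric] by (simp add: cnt_Suc)
    show "T (bits r) X (Suc y) = T (bits r) X (Suc M) + 1/(real L + 1)"
      using s1 s2 dx x y unfolding b_def[symmetric] by (simp add: T_Suc)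
  qed
qed

lemma iter_step:
  assumes X: "X \<in> infcoinf" and L: "\<forall>r\<in>cyl M k. cnt (bits r) (Suc M) = 2*L"
  shows "\<exists>M' k'. M \<le> M' \<and> cyl M' k' \<subseteq> cyl M k \<and>
     (\<forall>r\<in>cyl M' k'. cnt (bits r) (Suc M') = 2*L+2*K \<and>
        T (bits r) X (Suc M') = T (bits r) X (Suc M) + (\<Sum>j<K. 1/(real L + real j + 1)))"
proof (induction K)
  case 0
  show ?case using L by (intro exI[of _ M] exI[of _ k]) auto
next
  case (Suc K)
  then obtain M1 k1 where M1: "M \<le> M1" "cyl M1 k1 \<subseteq> cyl M k"
    "\<forall>r\<in>cyl M1 k1. cnt (bits r) (Suc M1) = 2*L+2*K \<and>
        T (bits r) X (Suc M1) = T (bits r) X (Suc M) + (\<Sum>j<K. 1/(real L + real j + 1))" by blast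
  have "\<forall>r\<in>cyl M1 k1. cnt (bits r) (Suc M1) = 2*(L+K)" using M1(3) by simp
  from pair_step[OF X this] obtain M2 k2 where M2: "M1 \<le> M2" "cyl M2 k2 \<subseteq> cyl M1 k1"
    "\<forall>r\<in>cyl M2 k2. cnt (bits r) (Suc M2) = 2*(L+K)+2 \<and>
        T (bits r) X (Suc M2) = T (bits r) X (Suc M1) + 1/(real (L+K) + 1)" by blast
  show ?case
  proof (intro exI[of _ M2] exI[of _ k2] conjI ballI)
    show "M \<le> M2" using M1 M2 by simp
    show "cyl M2 k2 \<subseteq> cyl M k" using M1 M2 by blast
  next
    fix r assume r: "r \<in> cyl M2 k2"
    hence r1: "r \<in> cyl M1 k1" using M2 by blast
    show "cnt (bits r) (Suc M2) = 2*L + 2*Suc K" using M2(3) r by simp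
    show "T (bits r) X (Suc M2) = T (bits r) X (Suc M) + (\<Sum>j<Suc K. 1/(real L + real j + 1))"
      using M2(3) r M1(3) r1 by (simp add: algebra_simps)
  qed
qed

lemma parity_fix:
  "\<exists>M k' L. N \<le> Suc M \<and> cyl M k' \<subseteq> cyl m k \<and> (\<forall>r\<in>cyl M k'. cnt (bits r) (Suc M) = 2*L)"
proof -
  define s0 where "s0 = (2 * real_of_int k + 1) / 2^(Suc m)"
  have s0: "s0 \<in> cyl m k" unfolding s0_def by (rule cyl_mid)
  define c where "c = cnt (bits s0) (Suc m)"
  define M where "M = Suc (max m N)"
  obtain k' where k': "cyl M k' \<subseteq> cyl m k"
    "\<forall>r\<in>cyl M k'. \<forall>j. m < j \<and> j \<le> M \<longrightarrow> rbit j r = (j = M \<and> odd c)"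
    using cyl_ext[of m M k "\<lambda>j. j = M \<and> odd c"] unfolding M_def by (meson le_SucI max.cobounded1)
  have "\<forall>r\<in>cyl M k'. cnt (bits r) (Suc M) = 2*((c + (if odd c then 1 else 0)) div 2)"
  proof
    fix r assume r: "r \<in> cyl M k'"
    hence rm: "r \<in> cyl m k" using k' by blast
    have "cnt (bits r) (Suc m) = c" unfolding c_def
      by (rule cnt_cong) (use cyl_same[OF rm s0] in \<open>auto simp: bits_def\<close>)
    moreover have "cnt (bits r) M = cnt (bits r) (Suc m)"
    proof -
      have z: "\<not> bits r j" if "Suc m \<le> j" "j < M" for j
        using k'(2) r that unfolding bits_def by auto
      have sm: "Suc m \<le> M" unfolding M_def by simp
      show ?thesis using seg[of "Suc m" M "bits r"] z sm by blast
    qed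
    moreover have "bits r M = odd c" using k'(2) r unfolding M_def bits_def by auto
    ultimately show "cnt (bits r) (Suc M) = 2*((c + (if odd c then 1 else 0)) div 2)"
      by (auto simp: cnt_Suc)
  qed
  moreover have "N \<le> Suc M" unfolding M_def by simp
  ultimately show ?thesis using k'(1) by blast
qed

lemma harm_block: "(\<Sum>j<Suc L. 1/(real L + real j + 1)) \<ge> 1/2"
proof -
  have "real (card {..<Suc L}) * (1/(2*real L + 1)) \<le> (\<Sum>j<Suc L. 1/(real L + real j + 1))"
    by (rule sum_bounded_below) (auto simp: frac_le)
  moreover have "real (card {..<Suc L}) * (1/(2*real L + 1)) \<ge> 1/2"
    by (simp add: field_simps)
  ultimately show ?thesis by linarith
qed

definition Cset :: "nat set \<Rightarrow> nat \<Rightarrow> real set" where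
  "Cset X N = {r. \<forall>n\<ge>N. \<forall>n'\<ge>N. \<bar>T (bits r) X n - T (bits r) X n'\<bar> < 1/2}"

definition Bad :: "nat \<Rightarrow> real set" where
  "Bad N = {r. \<forall>j\<ge>N. \<not> rbit j r}"

lemma nd_Bad: "nowhere_dense (Bad N)"
proof (rule nd_crit)
  fix m k
  define M where "M = Suc (max m N)"
  obtain k' where k': "cyl M k' \<subseteq> cyl m k" "\<forall>r\<in>cyl M k'. \<forall>j. m < j \<and> j \<le> M \<longrightarrow> rbit j r = True"
    using cyl_ext[of m M k "\<lambda>j. True"] unfolding M_def by (meson le_SucI max.cobounded1)
  have "cyl M k' \<inter> Bad N = {}"
  proof (rule ccontr)
    assume "cyl M k' \<inter> Bad N \<noteq> {}"
    then obtain r where r: "r \<in> cyl M k'" "\<forall>j\<ge>N. \<not> rbit j r" unfolding Bad_def by blast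
    have "rbit M r" using k'(2) r(1) unfolding M_def by simp
    moreover have "M \<ge> N" unfolding M_def by simp
    ultimately show False using r(2) by blast
  qed
  thus "\<exists>m' k'. cyl m' k' \<subseteq> cyl m k \<and> cyl m' k' \<inter> Bad N = {}" using k'(1) by blast
qed

lemma nd_Cset:
  assumes X: "X \<in> infcoinf"
  shows "nowhere_dense (Cset X N)"
proof (rule nd_crit)
  fix m k
  obtain M k1 L where P: "N \<le> Suc M" "cyl M k1 \<subseteq> cyl m k" "\<forall>r\<in>cyl M k1. cnt (bits r) (Suc M) = 2*L"
    using parity_fix by blast
  obtain M' k2 where I: "M \<le> M'" "cyl M' k2 \<subseteq> cyl M k1"
     "\<forall>r\<in>cyl M' k2. cnt (bits r) (Suc M') = 2*L+2*Suc L \<and>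
        T (bits r) X (Suc M') = T (bits r) X (Suc M) + (\<Sum>j<Suc L. 1/(real L + real j + 1))"
    using iter_step[OF X P(3), of "Suc L"] by blast
  have "cyl M' k2 \<inter> Cset X N = {}"
  proof (rule ccontr)
    assume "cyl M' k2 \<inter> Cset X N \<noteq> {}"
    then obtain r where r: "r \<in> cyl M' k2" "r \<in> Cset X N" by blast
    have "\<bar>T (bits r) X (Suc M') - T (bits r) X (Suc M)\<bar> < 1/2"
      using r(2) P(1) I(1) unfolding Cset_def by auto
    moreover have "T (bits r) X (Suc M') - T (bits r) X (Suc M) \<ge> 1/2"
      using I(3) r(1) harm_block[of L] by simp
    ultimately show False by linarith
  qed
  thus "\<exists>m' k'. cyl m' k' \<subseteq> cyl m k \<and> cyl m' k' \<inter> Cset X N = {}"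
    using I(2) P(2) by blast
qed

definition phi :: "real \<Rightarrow> nat \<Rightarrow> rat" where
  "phi r = dec (if infinite {j. rbit j r} then bits r else (\<lambda>_. True))"

lemma phi_S_cc: "phi r \<in> S_cc"
proof (cases "infinite {j. rbit j r}")
  case True
  have "infinite {j. bits r j}" using True unfolding bits_def .
  thus ?thesis using True unfolding phi_def by (simp add: dec_S_cc)
next
  case False
  have "infinite {j::nat. (\<lambda>_. True) j}" by (simp add: infinite_UNIV_nat)
  thus ?thesis using False unfolding phi_def by (simp add: dec_S_cc)
qed

lemma meagre_MX:
  assumes X: "X \<in> infcoinf"
  shows "meagre {r. subseries_convergent (phi r) X}"
  unfolding meagre_def
proof (intro exI conjI)
  have iX: "infinite X" using X unfolding infcoinf_def by auto
  show "countable (range (Cset X) \<union> range Bad)" by (intro countable_Un countable_image) simp_all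
  show "\<forall>T\<in>range (Cset X) \<union> range Bad. nowhere_dense T"
  proof
    fix T' assume "T' \<in> range (Cset X) \<union> range Bad"
    then obtain N where "T' = Cset X N \<or> T' = Bad N" by blast
    thus "nowhere_dense T'" using nd_Cset[OF X, of N] nd_Bad[of N] by blast
  qed
  show "{r. subseries_convergent (phi r) X} \<subseteq> \<Union> (range (Cset X) \<union> range Bad)"
  proof
    fix r assume r: "r \<in> {r. subseries_convergent (phi r) X}"
    show "r \<in> \<Union> (range (Cset X) \<union> range Bad)"
    proof (cases "infinite {j. rbit j r}")
      case True
      hence "summable (sub_seq (dec (bits r)) X)" using r unfolding phi_def subseries_convergent_def by simp
      then obtain N where "\<forall>n\<ge>N. \<forall>n'\<ge>N. \<bar>T (bits r) X n - T (bits r) X n'\<bar> < 1/2"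
        using cauchy_T[OF iX] by blast
      hence "r \<in> Cset X N" unfolding Cset_def by simp
      thus ?thesis by blast
    next
      case False
      then obtain N where N: "{j. rbit j r} \<subseteq> {..<N}" using finite_nat_iff_bounded by blast
      have "\<forall>j\<ge>N. \<not> rbit j r"
      proof (intro allI impI)
        fix j assume "N \<le> j"
        thus "\<not> rbit j r" using N by (metis lessThan_iff mem_Collect_eq not_le subsetD)
      qed
      hence "r \<in> Bad N" unfolding Bad_def by simp
      thus ?thesis by blast
    qed
  qed
qed

lemma meagre_subset:
  assumes "meagre S" "Y \<subseteq> S" shows "meagre Y"
proof -
  obtain F where F: "countable F" "\<forall>T\<in>F. nowhere_dense T" "S \<subseteq> \<Union>F"
    using assms(1) unfolding meagre_def by blast
  have "Y \<subseteq> \<Union>F" using F(3) assms(2) by (rule subset_trans[rotated])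
  thus ?thesis unfolding meagre_def using F(1,2) by blast
qed

theorem mainTheorem3:
  shows "(\<forall>\<X>. \<X> \<subseteq> infcoinf \<and> (\<forall>a\<in>S_cc. \<exists>X\<in>\<X>. subseries_convergent a X) \<longrightarrow>
            (\<exists>F. (\<forall>M\<in>F. meagre M) \<and> \<Union>F = (UNIV :: real set) \<and> F \<lesssim> \<X>))
       \<and> (\<forall>Y :: real set. \<not> meagre Y \<longrightarrow>
            (\<exists>A. A \<subseteq> S_cc \<and> A \<lesssim> Y \<and>
                 \<not> (\<exists>X\<in>infcoinf. \<forall>a\<in>A. subseries_convergent a X)))"
proof (intro conjI allI impI)
  fix \<X> :: "nat set set"
  assume H: "\<X> \<subseteq> infcoinf \<and> (\<forall>a\<in>S_cc. \<exists>X\<in>\<X>. subseries_convergent a X)"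
  define F where "F = (\<lambda>X. {r. subseries_convergent (phi r) X}) ` \<X>"
  show "\<exists>F. (\<forall>M\<in>F. meagre M) \<and> \<Union>F = (UNIV :: real set) \<and> F \<lesssim> \<X>"
  proof (intro exI[of _ F] conjI)
    show "\<forall>M\<in>F. meagre M"
    proof
      fix M assume "M \<in> F"
      then obtain X where X: "X \<in> \<X>" "M = {r. subseries_convergent (phi r) X}" unfolding F_def by blast
      have "X \<in> infcoinf" using H X(1) by blast
      thus "meagre M" using meagre_MX X(2) by simp
    qed
    show "\<Union>F = UNIV"
    proof (rule set_eqI, rule iffI)
      fix r :: real assume "r \<in> \<Union>F" show "r \<in> UNIV" by (rule UNIV_I)
    next
      fix r :: real
      have "phi r \<in> S_cc" by (rule phi_S_cc)
      then obtain X where X: "X \<in> \<X>" "subseries_convergent (phi r) X" using H by blast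
      hence "r \<in> {r. subseries_convergent (phi r) X}" by simp
      moreover have "{r. subseries_convergent (phi r) X} \<in> F" unfolding F_def using X(1) by (rule imageI)
      ultimately show "r \<in> \<Union>F" by (rule UnionI[rotated])
    qed
    show "F \<lesssim> \<X>" unfolding F_def by (rule image_lepoll)
  qed
next
  fix Y :: "real set"
  assume nY: "\<not> meagre Y"
  show "\<exists>A. A \<subseteq> S_cc \<and> A \<lesssim> Y \<and> \<not> (\<exists>X\<in>infcoinf. \<forall>a\<in>A. subseries_convergent a X)"
  proof (intro exI[of _ "phi ` Y"] conjI)
    show "phi ` Y \<subseteq> S_cc" using phi_S_cc by (rule image_subsetI)
    show "phi ` Y \<lesssim> Y" by (rule image_lepoll)
    show "\<not> (\<exists>X\<in>infcoinf. \<forall>a\<in>phi ` Y. subseries_convergent a X)"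
    proof
      assume "\<exists>X\<in>infcoinf. \<forall>a\<in>phi ` Y. subseries_convergent a X"
      then obtain X where X: "X \<in> infcoinf" "\<forall>a\<in>phi ` Y. subseries_convergent a X" by blast
      have "Y \<subseteq> {r. subseries_convergent (phi r) X}" using X(2) by (simp add: subset_eq)
      hence "meagre Y" using meagre_subset meagre_MX[OF X(1)] by metis
      thus False using nY by simp
    qed
  qed
qed

end
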